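(* Let $M_\sharp\in\mathbb{R}^{d_1\times d_2}$ have rank $r$, let $M_\sharp=U\Lambda V^\top$ be a compact singular value decomposition ($U\in\mathbb{R}^{d_1\times r}$, $V\in\mathbb{R}^{d_2\times r}$ with orthonormal columns, $\Lambda$ diagonal $r\times r$ with positive entries), and set $X_\sharp=U\sqrt\Lambda$, $Y_\sharp=\sqrt\Lambda V^\top$. Let $$\mathcal{D}^*(M_\sharp)=\{(X_\sharp A,A^{-1}Y_\sharp):A\in GL(r)\}.$$ Fix $\nu>0$. Then for all $X\in\mathbb{R}^{d_1\times r}$, $Y\in\mathbb{R}^{r\times d_2}$ satisfying $$\max\{\|X-X_\sharp\|_F,\|Y-Y_\sharp\|_F\}\le\nu\sqrt{\sigma_r(M_\sharp)},\qquad \mathrm{dist}\big((X,Y),\mathcal{D}^*(M_\sharp)\big)\le\frac{\sqrt{\sigma_r(M_\sharp)}}{1+2(1+\sqrt2)\nu},$$ we have $$\|XY-M_\sharp\|_F\ge\frac{\sqrt{\sigma_r(M_\sharp)}}{2+4(1+\sqrt2)\nu}\cdot\mathrm{dist}\big((X,Y),\mathcal{D}^*(M_\sharp)\big).$$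
   Context: $\sigma_r(M)$ is the $r$-th largest singular value. $GL(r)$ is the set of invertible $r\times r$ matrices. The distance is $\mathrm{dist}((X,Y),\mathcal{D}^*(M_\sharp))=\inf_{A\in GL(r)}\sqrt{\|X-X_\sharp A\|_F^2+\|Y-A^{-1}Y_\sharp\|_F^2}$. *)

theory Defs
  imports "HOL-Analysis.Analysis"
begin

definition frob :: "real^'n^'m \<Rightarrow> real" where
  "frob A = sqrt (\<Sum>i\<in>UNIV. \<Sum>j\<in>UNIV. (A $ i $ j)\<^sup>2)"

text \<open>The k-th largest singular value (k \<ge> 1), via the Courant--Fischer min-max
  characterisation: the maximum over k-dimensional subspaces S of the minimum of
  the norm of M x over unit vectors x in S.\<close>
definition singular_value :: "nat \<Rightarrow> real^'n^'m \<Rightarrow> real" where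
  "singular_value k M =
     Sup ((\<lambda>S. Inf ((\<lambda>x. norm (M *v x)) ` {x\<in>S. norm x = 1})) `
          {S. subspace S \<and> dim S = k})"

definition diagm :: "('r::finite \<Rightarrow> real) \<Rightarrow> real^'r^'r" where
  "diagm l = (\<chi> i j. if i = j then l i else 0)"

definition dist_Dstar :: "real^'r^'d1 \<Rightarrow> real^'d2^'r \<Rightarrow> real^'r^'d1 \<Rightarrow> real^'d2^'r \<Rightarrow> real" where
  "dist_Dstar X Y Xs Ys =
     Inf ((\<lambda>A. sqrt ((frob (X - Xs ** A))\<^sup>2 + (frob (Y - matrix_inv A ** Ys))\<^sup>2))
          ` {A :: real^'r^'r. invertible A})"

end

theory Submission
  imports Defs
begin

lemma frob_norm: "frob (A::real^'n^'m) = norm A"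
proof -
  have "norm A = sqrt (\<Sum>i\<in>UNIV. (norm (A$i))\<^sup>2)" by (simp add: norm_vec_def L2_set_def)
  also have "\<dots> = sqrt (\<Sum>i\<in>UNIV. \<Sum>j\<in>UNIV. (A $ i $ j)\<^sup>2)"
    by (simp add: norm_vec_def L2_set_def sum_nonneg)
  finally show ?thesis by (simp add: frob_def)
qed

lemma norm_sq_rows: "(norm (A::real^'n^'m))\<^sup>2 = (\<Sum>i\<in>UNIV. (norm (A$i))\<^sup>2)"
  by (simp add: norm_vec_def L2_set_def sum_nonneg)

lemma matrix_inv_props:
  fixes A :: "real^'n^'n" assumes "invertible A"
  shows "A ** matrix_inv A = mat 1" "matrix_inv A ** A = mat 1"
proof -
  from assms obtain A' where "A ** A' = mat 1 \<and> A' ** A = mat 1" unfolding invertible_def by blast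
  then have "A ** matrix_inv A = mat 1 \<and> matrix_inv A ** A = mat 1"
    unfolding matrix_inv_def by (rule someI)
  then show "A ** matrix_inv A = mat 1" "matrix_inv A ** A = mat 1" by auto
qed

lemma mv_norm_le: "norm ((E::real^'n^'m) *v v) \<le> norm E * norm v"
proof -
  have "(norm (E *v v))\<^sup>2 = (\<Sum>i\<in>UNIV. ((E *v v)$i)\<^sup>2)" by (simp add: norm_vec_def L2_set_def sum_nonneg)
  also have "\<dots> \<le> (\<Sum>i\<in>UNIV. (norm (E$i))\<^sup>2 * (norm v)\<^sup>2)"
  proof (rule sum_mono)
    fix i
    have "\<bar>(E *v v)$i\<bar> \<le> norm (E$i) * norm v"
      unfolding matrix_vector_mul_component by (rule Cauchy_Schwarz_ineq2)
    then have "((E *v v)$i)\<^sup>2 \<le> (norm (E$i) * norm v)\<^sup>2"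
      by (metis abs_ge_zero power2_abs power_mono)
    then show "((E *v v)$i)\<^sup>2 \<le> (norm (E$i))\<^sup>2 * (norm v)\<^sup>2" by (simp add: power_mult_distrib)
  qed
  also have "\<dots> = (norm E * norm v)\<^sup>2" by (simp add: norm_sq_rows sum_distrib_right power_mult_distrib)
  finally show ?thesis by (rule power2_le_imp_le) simp
qed

lemma adj_mv: "((A::real^'n^'m) *v x) \<bullet> y = x \<bullet> (transpose A *v y)"
  by (metis dot_lmul_matrix inner_commute transpose_matrix_vector)

lemma iso_norm:
  fixes U :: "real^'r^'d"
  assumes "transpose U ** U = mat 1"
  shows "norm (U *v x) = norm x"
proof -
  have "(U *v x) \<bullet> (U *v x) = x \<bullet> x"
    by (simp add: adj_mv matrix_vector_mul_assoc assms)
  then show ?thesis by (simp add: norm_eq_sqrt_inner)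
qed

lemma contr_norm:
  fixes U :: "real^'r^'d"
  assumes "transpose U ** U = mat 1"
  shows "norm (transpose U *v x) \<le> norm x"
proof -
  have "(norm (transpose U *v x))\<^sup>2 = (transpose U *v x) \<bullet> (transpose U *v x)"
    by (simp add: power2_norm_eq_inner)
  also have "\<dots> = x \<bullet> (U *v (transpose U *v x))" by (metis adj_mv transpose_transpose)
  also have "\<dots> \<le> norm x * norm (U *v (transpose U *v x))" by (rule norm_cauchy_schwarz)
  also have "\<dots> = norm x * norm (transpose U *v x)" using iso_norm[OF assms] by simp
  finally have "(norm (transpose U *v x))\<^sup>2 \<le> norm x * norm (transpose U *v x)" .
  then have "norm (transpose U *v x) * norm (transpose U *v x) \<le> norm x * norm (transpose U *v x)"
    by (simp add: power2_eq_square)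
  then show ?thesis
    by (cases "norm (transpose U *v x) = 0") (simp_all add: mult_le_cancel_right)
qed

lemma row_mult: "((P::real^'k^'m) ** Q) $ i = transpose Q *v (P $ i)"
  by (simp add: matrix_matrix_mult_def matrix_vector_mult_def transpose_def vec_eq_iff mult.commute)

lemma norm_transpose: "norm (transpose (A::real^'n^'m)) = norm A"
proof -
  have "(\<Sum>i\<in>UNIV. \<Sum>j\<in>UNIV. (transpose A $ i $ j)\<^sup>2) = (\<Sum>i\<in>UNIV. \<Sum>j\<in>UNIV. (A $ i $ j)\<^sup>2)"
    by (simp add: transpose_def) (rule sum.swap)
  then show ?thesis by (simp add: frob_norm[symmetric] frob_def)
qed

lemma row_lower:
  fixes W :: "real^'n^'k" and P :: "real^'n^'m"
  assumes "\<And>v. norm (W *v v) \<ge> c * norm v" "c \<ge> 0"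
  shows "norm (P ** transpose W) \<ge> c * norm P"
proof -
  have "(c * norm P)\<^sup>2 = (\<Sum>i\<in>UNIV. (c * norm (P$i))\<^sup>2)"
    by (simp add: norm_sq_rows power_mult_distrib sum_distrib_left)
  also have "\<dots> \<le> (\<Sum>i\<in>UNIV. (norm (W *v (P$i)))\<^sup>2)"
    by (rule sum_mono, rule power_mono[OF assms(1)]) (simp add: assms)
  also have "\<dots> = (norm (P ** transpose W))\<^sup>2" by (simp add: norm_sq_rows row_mult)
  finally show ?thesis by (rule power2_le_imp_le) simp
qed

lemma row_upper:
  fixes W :: "real^'n^'k" and P :: "real^'n^'m"
  assumes "\<And>v. norm (W *v v) \<le> c * norm v" "c \<ge> 0"
  shows "norm (P ** transpose W) \<le> c * norm P"
proof -
  have "(norm (P ** transpose W))\<^sup>2 = (\<Sum>i\<in>UNIV. (norm (W *v (P$i)))\<^sup>2)" by (simp add: norm_sq_rows row_mult)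
  also have "\<dots> \<le> (\<Sum>i\<in>UNIV. (c * norm (P$i))\<^sup>2)"
    by (rule sum_mono, rule power_mono[OF assms(1)]) simp
  also have "\<dots> = (c * norm P)\<^sup>2"
    by (simp add: norm_sq_rows power_mult_distrib sum_distrib_left)
  finally show ?thesis by (rule power2_le_imp_le) (simp add: assms)
qed

lemma col_lower:
  fixes W :: "real^'n^'k" and P :: "real^'m^'n"
  assumes "\<And>v. norm (W *v v) \<ge> c * norm v" "c \<ge> 0"
  shows "norm (W ** P) \<ge> c * norm P"
proof -
  have "norm (W ** P) = norm (transpose P ** transpose W)"
    using norm_transpose[of "W ** P"] by (simp only: matrix_transpose_mul)
  then show ?thesis using row_lower[OF assms, of "transpose P"] by (simp add: norm_transpose)
qed

lemma col_upper:
  fixes W :: "real^'n^'k" and P :: "real^'m^'n"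
  assumes "\<And>v. norm (W *v v) \<le> c * norm v" "c \<ge> 0"
  shows "norm (W ** P) \<le> c * norm P"
proof -
  have "norm (W ** P) = norm (transpose P ** transpose W)"
    using norm_transpose[of "W ** P"] by (simp only: matrix_transpose_mul)
  then show ?thesis using row_upper[OF assms, of "transpose P"] by (simp add: norm_transpose)
qed

lemma adj_mm: "((U::real^'k^'m) ** P) \<bullet> Q = P \<bullet> (transpose U ** Q)"
proof -
  have "((U ** P) \<bullet> Q) = (\<Sum>i\<in>UNIV. \<Sum>j\<in>UNIV. (\<Sum>k\<in>UNIV. U$i$k * P$k$j) * Q$i$j)"
    by (simp add: inner_vec_def matrix_matrix_mult_def)
  also have "\<dots> = (\<Sum>i\<in>UNIV. \<Sum>j\<in>UNIV. \<Sum>k\<in>UNIV. U$i$k * P$k$j * Q$i$j)"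
    by (simp add: sum_distrib_right)
  also have "\<dots> = (\<Sum>i\<in>UNIV. \<Sum>k\<in>UNIV. \<Sum>j\<in>UNIV. U$i$k * P$k$j * Q$i$j)"
    by (rule sum.cong[OF refl], rule sum.swap)
  also have "\<dots> = (\<Sum>k\<in>UNIV. \<Sum>i\<in>UNIV. \<Sum>j\<in>UNIV. U$i$k * P$k$j * Q$i$j)"
    by (rule sum.swap)
  also have "\<dots> = (\<Sum>k\<in>UNIV. \<Sum>j\<in>UNIV. \<Sum>i\<in>UNIV. U$i$k * P$k$j * Q$i$j)"
    by (rule sum.cong[OF refl], rule sum.swap)
  also have "\<dots> = (\<Sum>k\<in>UNIV. \<Sum>j\<in>UNIV. P$k$j * (\<Sum>i\<in>UNIV. U$i$k * Q$i$j))"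
    by (simp add: sum_distrib_left mult.commute mult.left_commute)
  also have "\<dots> = P \<bullet> (transpose U ** Q)"
    by (simp add: inner_vec_def matrix_matrix_mult_def transpose_def)
  finally show ?thesis .
qed

lemma diag_mv: "diagm l *v x = (\<chi> i. l i * x$i)"
proof -
  have "(\<Sum>j\<in>UNIV. (if i = j then l i else 0) * x$j) = l i * x$i" for i
  proof -
    have "(\<Sum>j\<in>UNIV. (if i = j then l i else 0) * x$j) = (\<Sum>j\<in>UNIV. if i = j then l i * x$j else 0)"
      by (rule sum.cong) auto
    also have "\<dots> = l i * x$i" by (simp add: sum.delta)
    finally show ?thesis .
  qed
  then show ?thesis by (simp add: diagm_def matrix_vector_mult_def vec_eq_iff)
qed

lemma diag_mm: "diagm a ** diagm b = diagm (\<lambda>i. a i * b i)"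
proof -
  have "(\<Sum>k\<in>UNIV. (if i = k then a i else 0) * (if k = j then b k else 0)) = (if i = j then a i * b i else 0)" for i j
  proof -
    have "(\<Sum>k\<in>UNIV. (if i = k then a i else 0) * (if k = j then b k else 0)) = (\<Sum>k\<in>UNIV. if i = k then a i * (if k = j then b k else 0) else 0)"
      by (rule sum.cong) auto
    also have "\<dots> = a i * (if i = j then b i else 0)" by (simp add: sum.delta)
    finally show ?thesis by simp
  qed
  then show ?thesis by (simp add: diagm_def matrix_matrix_mult_def vec_eq_iff)
qed

lemma diag_transpose: "transpose (diagm l) = diagm l"
  by (simp add: diagm_def transpose_def vec_eq_iff)

lemma norm_sq_real_vec: "(norm (x::real^'n))\<^sup>2 = (\<Sum>i\<in>UNIV. (x$i)\<^sup>2)"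
  by (simp add: norm_vec_def L2_set_def sum_nonneg)

lemma diag_upper:
  assumes "\<And>i. \<bar>l i\<bar> \<le> m"
  shows "norm (diagm l *v x) \<le> m * norm x"
proof -
  have m0: "m \<ge> 0" using assms[of undefined] by simp
  have "(norm (diagm l *v x))\<^sup>2 = (\<Sum>i\<in>UNIV. (l i * x$i)\<^sup>2)" by (simp add: norm_sq_real_vec diag_mv)
  also have "\<dots> \<le> (\<Sum>i\<in>UNIV. m\<^sup>2 * (x$i)\<^sup>2)"
  proof (rule sum_mono)
    fix i
    have "(l i)\<^sup>2 \<le> m\<^sup>2" using assms[of i] by (metis abs_ge_zero power2_abs power_mono)
    then show "(l i * x$i)\<^sup>2 \<le> m\<^sup>2 * (x$i)\<^sup>2"
      by (simp add: power_mult_distrib mult_right_mono)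
  qed
  also have "\<dots> = (m * norm x)\<^sup>2" by (simp add: norm_sq_real_vec power_mult_distrib sum_distrib_left)
  finally show ?thesis by (rule power2_le_imp_le) (simp add: m0)
qed

lemma diag_lower:
  assumes "\<And>i. m \<le> \<bar>l i\<bar>" "m \<ge> 0"
  shows "m * norm x \<le> norm (diagm l *v x)"
proof -
  have "(m * norm x)\<^sup>2 = (\<Sum>i\<in>UNIV. m\<^sup>2 * (x$i)\<^sup>2)" by (simp add: norm_sq_real_vec power_mult_distrib sum_distrib_left)
  also have "\<dots> \<le> (\<Sum>i\<in>UNIV. (l i * x$i)\<^sup>2)"
  proof (rule sum_mono)
    fix i
    have "m\<^sup>2 \<le> (l i)\<^sup>2" using assms by (metis power2_abs power_mono)
    then show "m\<^sup>2 * (x$i)\<^sup>2 \<le> (l i * x$i)\<^sup>2"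
      by (simp add: power_mult_distrib mult_right_mono)
  qed
  also have "\<dots> = (norm (diagm l *v x))\<^sup>2" by (simp add: norm_sq_real_vec diag_mv)
  finally show ?thesis by (rule power2_le_imp_le) simp
qed

lemma sv_le:
  fixes U :: "real^'r^'d1" and V :: "real^'r^'d2" and lam :: "'r \<Rightarrow> real"
  assumes U: "transpose U ** U = mat 1" and V: "transpose V ** V = mat 1"
    and lam: "\<And>i. lam i > 0"
  shows "singular_value CARD('r) (U ** diagm lam ** transpose V) \<le> lam i0"
proof -
  define M where "M = U ** diagm lam ** transpose V"
  define SS where "SS = {S::(real^'d2) set. subspace S \<and> dim S = CARD('r)}"
  define F where "F = (\<lambda>S. Inf ((\<lambda>x. norm (M *v x)) ` {x\<in>S. norm x = 1}))"
  have injV: "inj ((*v) V)"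
  proof (rule injI)
    fix x y assume "V *v x = V *v y"
    then have "norm (V *v (x - y)) = 0" by (simp add: matrix_vector_mult_diff_distrib)
    then show "x = y" using iso_norm[OF V, of "x - y"] by simp
  qed
  have ne: "SS \<noteq> {}"
  proof -
    have "dim (span (range ((*v) V))) = CARD('r)"
    proof -
      have "dim (range ((*v) V)) = dim (UNIV :: (real^'r) set)"
        by (rule dim_image_eq) (auto intro: inj_on_subset[OF injV] simp: matrix_vector_mul_linear)
      then show ?thesis by (simp add: dim_span)
    qed
    then have "span (range ((*v) V)) \<in> SS" by (simp add: SS_def subspace_span)
    then show ?thesis by blast
  qed
  have bound: "F S \<le> lam i0" if "S \<in> SS" for S
  proof -
    have sS: "subspace S" and dS: "dim S = CARD('r)" using that by (auto simp: SS_def)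
    define G :: "real^'d2^'r" where "G = (\<chi> j. if j = i0 then 0 else (transpose V) $ j)"
    define T :: "(real^'r) set" where "T = {y. y $ i0 = 0}"
    have sT: "subspace T" by (auto simp: subspace_def T_def)
    have "axis i0 1 \<notin> T" by (simp add: T_def axis_def)
    then have "span T \<noteq> UNIV" using sT by (metis UNIV_I span_eq_iff)
    then have "dim T \<noteq> CARD('r)" using dim_eq_full[of T] by simp
    then have dT: "dim T < CARD('r)" using dim_subset_UNIV_cart[of T] by simp
    have GS: "(*v) G ` S \<subseteq> T" by (auto simp: T_def G_def matrix_vector_mult_def)
    have "\<not> inj_on ((*v) G) S"
    proof
      assume inj: "inj_on ((*v) G) S"
      have spS: "span S = S" using sS by (simp add: span_eq_iff)
      have "dim ((*v) G ` S) = dim S"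
        by (rule dim_image_eq[OF matrix_vector_mul_linear]) (simp add: spS inj)
      moreover have "dim ((*v) G ` S) \<le> dim T" using GS by (rule dim_subset)
      ultimately show False using dS dT by simp
    qed
    then obtain x y where xy: "x \<in> S" "y \<in> S" "x \<noteq> y" "G *v x = G *v y" by (auto simp: inj_on_def)
    define z where "z = x - y"
    have zS: "z \<in> S" using sS xy by (simp add: z_def subspace_diff)
    have z0: "z \<noteq> 0" using xy by (simp add: z_def)
    have Gz: "G *v z = 0" using xy by (simp add: z_def matrix_vector_mult_diff_distrib)
    define u where "u = (1 / norm z) *\<^sub>R z"
    have uS: "u \<in> S" using sS zS by (simp add: u_def subspace_scale)
    have nu: "norm u = 1" using z0 by (simp add: u_def)
    have Gu: "G *v u = 0" using Gz by (simp add: u_def matrix_vector_mult_scaleR)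
    define w where "w = transpose V *v u"
    have w0: "w $ j = 0" if "j \<noteq> i0" for j
    proof -
      have "(G *v u) $ j = 0" using Gu by simp
      then show ?thesis using that by (simp add: G_def w_def matrix_vector_mult_def)
    qed
    have dw: "diagm lam *v w = lam i0 *\<^sub>R w"
    proof -
      have "lam i * w$i = lam i0 * w$i" for i by (cases "i = i0") (simp_all add: w0)
      then show ?thesis by (simp add: diag_mv vec_eq_iff)
    qed
    have "M *v u = U *v (diagm lam *v w)"
      unfolding M_def w_def by (simp only: matrix_vector_mul_assoc matrix_mul_assoc)
    then have "norm (M *v u) = lam i0 * norm w"
      using iso_norm[OF U] lam[of i0] by (simp add: dw)
    also have "\<dots> \<le> lam i0 * norm u"
      using contr_norm[OF V, of u] lam[of i0] by (simp add: w_def)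
    finally have le: "norm (M *v u) \<le> lam i0" using nu by simp
    have mem: "norm (M *v u) \<in> (\<lambda>x. norm (M *v x)) ` {x\<in>S. norm x = 1}" using uS nu by blast
    have bdd: "bdd_below ((\<lambda>x. norm (M *v x)) ` {x\<in>S. norm x = 1})"
      by (rule bdd_belowI[where m=0]) auto
    have "F S \<le> norm (M *v u)"
      unfolding F_def by (rule cInf_lower[OF mem bdd])
    then show ?thesis using le by simp
  qed
  have "Sup (F ` SS) \<le> lam i0"
    using ne bound by (intro cSup_least) auto
  moreover have "singular_value CARD('r) M = Sup (F ` SS)"
    unfolding singular_value_def F_def SS_def by (rule refl)
  ultimately show ?thesis by (simp only: M_def)
qed

lemma diag_one: "diagm (\<lambda>i. 1) = mat 1"
  by (simp add: diagm_def mat_def)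

lemma transpose_diff: "transpose (A - B) = transpose A - (transpose (B::real^'n^'m))"
  by (simp add: transpose_def vec_eq_iff)

lemma sig_lower:
  fixes P Q :: "real^'r^'r" and d :: "'r \<Rightarrow> real"
  assumes inv: "Q ** diagm (\<lambda>i. 1 / d i) ** diagm (\<lambda>i. 1 / d i) ** P = mat 1"
    and QD: "norm (Q - diagm d) \<le> \<mu>" and mu0: "\<mu> \<ge> 0"
    and s0: "s > 0" and ds: "\<And>i. s \<le> d i"
  shows "s\<^sup>2 / (s + \<mu>) * norm w \<le> norm (P *v w)"
proof -
  define Di where "Di = diagm (\<lambda>i. 1 / d i)"
  define t where "t = norm (P *v w)"
  define p where "p = Di *v (Di *v (P *v w))"
  have dpos: "d i > 0" for i using ds[of i] s0 by linarith
  have DDi: "diagm d ** Di = mat 1"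
  proof -
    have "(\<lambda>i. d i * (1 / d i)) = (\<lambda>i. 1)" using dpos by (simp add: fun_eq_iff less_imp_neq[symmetric])
    then show ?thesis unfolding Di_def diag_mm by (simp only: diag_one)
  qed
  have Di_le: "norm (Di *v x) \<le> (1/s) * norm x" for x
    unfolding Di_def
  proof (rule diag_upper)
    fix i show "\<bar>1 / d i\<bar> \<le> 1 / s" using dpos[of i] ds[of i] s0 by (simp add: frac_le)
  qed
  have wp: "w = Q *v p"
    using inv unfolding p_def Di_def by (simp add: matrix_vector_mul_assoc matrix_mul_assoc)
  have Dp: "diagm d *v p = Di *v (P *v w)"
  proof -
    have "diagm d *v (Di *v y) = y" for y by (simp only: matrix_vector_mul_assoc DDi matrix_vector_mul_lid)
    then show ?thesis unfolding p_def by blast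
  qed
  have n1: "norm (diagm d *v p) \<le> t / s"
    using Di_le[of "P *v w"] by (simp add: Dp t_def)
  have n2: "norm p \<le> t / s\<^sup>2"
  proof -
    have "norm p \<le> (1/s) * norm (Di *v (P *v w))" unfolding p_def by (rule Di_le)
    also have "\<dots> \<le> (1/s) * ((1/s) * t)"
      using Di_le[of "P *v w"] s0 by (intro mult_left_mono) (simp_all add: t_def)
    finally show ?thesis by (simp add: power2_eq_square)
  qed
  have "norm w \<le> norm (diagm d *v p) + norm ((Q - diagm d) *v p)"
  proof -
    have "w = diagm d *v p + (Q - diagm d) *v p" using wp by (simp add: matrix_vector_mult_diff_rdistrib)
    then show ?thesis by (metis norm_triangle_ineq)
  qed
  also have "\<dots> \<le> t / s + \<mu> * (t / s\<^sup>2)"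
  proof -
    have "norm ((Q - diagm d) *v p) \<le> norm (Q - diagm d) * norm p" by (rule mv_norm_le)
    also have "\<dots> \<le> \<mu> * (t / s\<^sup>2)" using QD n2 mu0 by (intro mult_mono) simp_all
    finally show ?thesis using n1 by linarith
  qed
  also have "\<dots> = t * (s + \<mu>) / s\<^sup>2" using s0 by (simp add: field_simps power2_eq_square)
  finally have "norm w \<le> t * (s + \<mu>) / s\<^sup>2" .
  then have "s\<^sup>2 * norm w \<le> t * (s + \<mu>)" using s0 by (simp add: field_simps)
  then show ?thesis using s0 mu0 by (simp add: t_def field_simps)
qed

lemma arith_main:
  fixes \<nu> K :: real
  assumes "\<nu> \<ge> 1/2" "K \<ge> 1 + 48/10 * \<nu>"
  shows "17/10 * (1 + \<nu>) * K + 204/100 \<le> K * K"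
proof -
  have K0: "K \<ge> 34/10" using assms by linarith
  have a: "K * K \<ge> K * (1 + 48/10 * \<nu>)" using assms K0 by (intro mult_left_mono) auto
  have b: "\<nu> * K \<ge> 1/2 * K" using assms K0 by (intro mult_right_mono) auto
  have a2: "K * K \<ge> K + 48/10 * (\<nu> * K)" using a by (simp add: algebra_simps)
  have c: "17/10 * (1 + \<nu>) * K = 17/10 * K + 17/10 * (\<nu> * K)" by (simp add: algebra_simps)
  show ?thesis unfolding c using a2 b K0 by linarith
qed

lemma mm_diff_l: "(A::real^'n^'m) ** (B - C) = A ** B - A ** C"
  by (simp add: matrix_matrix_mult_def vec_eq_iff sum_subtractf[symmetric] algebra_simps)

lemma mm_diff_r: "((A::real^'n^'m) - B) ** C = A ** C - B ** C"
  by (simp add: matrix_matrix_mult_def vec_eq_iff sum_subtractf[symmetric] algebra_simps)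

lemma iso_mm:
  fixes U :: "real^'r^'d"
  assumes U: "transpose U ** U = mat 1"
  shows "norm (U ** P) = norm P"
proof -
  have "norm (U ** P) \<ge> 1 * norm P" by (rule col_lower) (simp_all add: iso_norm[OF U])
  moreover have "norm (U ** P) \<le> 1 * norm P" by (rule col_upper) (simp_all add: iso_norm[OF U])
  ultimately show ?thesis by simp
qed

lemma contr_left:
  fixes U :: "real^'r^'d"
  assumes U: "transpose U ** U = mat 1"
  shows "norm (transpose U ** P) \<le> norm P"
  using col_upper[of "transpose U" 1 P] contr_norm[OF U] by simp

lemma contr_right:
  fixes V :: "real^'r^'d"
  assumes V: "transpose V ** V = mat 1"
  shows "norm (P ** V) \<le> norm P"
  using row_upper[of "transpose V" 1 P] contr_norm[OF V] by simp

lemma key: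
  fixes U :: "real^'r^'d1" and V :: "real^'r^'d2" and X :: "real^'r^'d1" and Y :: "real^'d2^'r"
    and d :: "'r \<Rightarrow> real"
  assumes U: "transpose U ** U = mat 1" and V: "transpose V ** V = mat 1"
    and dpos: "\<And>i. d i > 0" and c0: "c > 0"
    and hX: "\<And>v. c * norm v \<le> norm ((transpose U ** X) *v v)"
    and hY: "\<And>v. c * norm v \<le> norm (transpose (Y ** V) *v v)"
  shows "c * Inf ((\<lambda>A. sqrt ((norm (X - U ** diagm d ** A))\<^sup>2 + (norm (Y - matrix_inv A ** (diagm d ** transpose V)))\<^sup>2)) ` {A. invertible A})
    \<le> norm (X ** Y - U ** (diagm d ** diagm d) ** transpose V)"
proof -
  define D where "D = diagm d"
  define Di where "Di = diagm (\<lambda>i. 1 / d i)"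
  define X1 where "X1 = transpose U ** X"
  define f where "f = (\<lambda>A. sqrt ((norm (X - U ** D ** A))\<^sup>2 + (norm (Y - matrix_inv A ** (D ** transpose V)))\<^sup>2))"
  have DDi: "D ** Di = mat 1" and DiD: "Di ** D = mat 1"
  proof -
    have "(\<lambda>i. d i * (1 / d i)) = (\<lambda>i. 1)" using dpos by (simp add: fun_eq_iff less_imp_neq[symmetric])
    then show "D ** Di = mat 1" unfolding D_def Di_def diag_mm by (simp only: diag_one)
    have "(\<lambda>i. (1 / d i) * d i) = (\<lambda>i. 1)" using dpos by (simp add: fun_eq_iff less_imp_neq[symmetric])
    then show "Di ** D = mat 1" unfolding D_def Di_def diag_mm by (simp only: diag_one)
  qed
  have injX1: "inj ((*v) X1)"
  proof (rule injI)
    fix x y assume "X1 *v x = X1 *v y"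
    then have "X1 *v (x - y) = 0" by (simp add: matrix_vector_mult_diff_distrib)
    then have "c * norm (x - y) \<le> 0" using hX[of "x - y"] by (simp add: X1_def)
    then show "x = y" using c0 by (simp add: mult_le_0_iff)
  qed
  have invX1: "invertible X1"
    using injX1 by (simp add: invertible_left_inverse matrix_left_invertible_injective)
  have invDi: "invertible Di" unfolding invertible_def using DiD DDi by blast
  define A0 where "A0 = Di ** X1"
  have invA0: "invertible A0" unfolding A0_def by (rule invertible_mult[OF invDi invX1])
  define Ai where "Ai = matrix_inv A0"
  have A0Ai: "A0 ** Ai = mat 1" unfolding Ai_def by (rule matrix_inv_props(1)[OF invA0])
  have XsA0: "U ** D ** A0 = U ** X1"
    unfolding A0_def by (simp add: matrix_mul_assoc[symmetric]) (simp add: matrix_mul_assoc DDi)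
  have X1Ai: "X1 ** Ai = D"
  proof -
    have "D ** (Di ** X1 ** Ai) = D" using A0Ai by (simp add: A0_def)
    then show ?thesis by (simp add: matrix_mul_assoc DDi)
  qed
  define W where "W = Y - Ai ** (D ** transpose V)"
  define Xp where "Xp = X - U ** X1"
  have UXp: "transpose U ** Xp = 0"
    by (simp add: Xp_def mm_diff_l matrix_mul_assoc U X1_def)
  have decomp: "X ** Y - U ** (D ** D) ** transpose V = U ** (X1 ** W) + Xp ** Y"
  proof -
    have "X1 ** W = X1 ** Y - D ** D ** transpose V"
      by (simp add: W_def mm_diff_l matrix_mul_assoc X1Ai)
    then have "U ** (X1 ** W) = U ** X1 ** Y - U ** (D ** D) ** transpose V"
      by (simp add: mm_diff_l matrix_mul_assoc)
    moreover have "Xp ** Y = X ** Y - U ** X1 ** Y" by (simp add: Xp_def mm_diff_r)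
    ultimately show ?thesis by simp
  qed
  have orth: "orthogonal (U ** (X1 ** W)) (Xp ** Y)"
    unfolding orthogonal_def adj_mm by (simp add: matrix_mul_assoc UXp)
  have n1: "norm (X1 ** W) \<ge> c * norm W"
    by (rule col_lower) (use hX c0 in \<open>simp_all add: X1_def\<close>)
  have n2: "norm (Xp ** Y) \<ge> c * norm Xp"
  proof -
    have "norm (Xp ** Y ** V) \<le> norm (Xp ** Y)" by (rule contr_right[OF V])
    moreover have "norm (Xp ** transpose (transpose (Y ** V))) \<ge> c * norm Xp"
      by (rule row_lower) (use hY c0 in simp_all)
    ultimately show ?thesis by (simp add: matrix_mul_assoc)
  qed
  have "(norm (X ** Y - U ** (D ** D) ** transpose V))\<^sup>2 = (norm (X1 ** W))\<^sup>2 + (norm (Xp ** Y))\<^sup>2"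
    unfolding decomp using norm_add_Pythagorean[OF orth] iso_mm[OF U] by simp
  also have "\<dots> \<ge> (c * norm W)\<^sup>2 + (c * norm Xp)\<^sup>2"
    using n1 n2 c0 by (intro add_mono power_mono) simp_all
  finally have sq: "c\<^sup>2 * ((norm Xp)\<^sup>2 + (norm W)\<^sup>2) \<le> (norm (X ** Y - U ** (D ** D) ** transpose V))\<^sup>2"
    by (simp add: power_mult_distrib algebra_simps)
  have fA0: "f A0 = sqrt ((norm Xp)\<^sup>2 + (norm W)\<^sup>2)"
    unfolding f_def XsA0 by (simp add: Xp_def W_def Ai_def)
  have cf: "c * f A0 \<le> norm (X ** Y - U ** (D ** D) ** transpose V)"
  proof -
    have "c * f A0 = sqrt (c\<^sup>2 * ((norm Xp)\<^sup>2 + (norm W)\<^sup>2))"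
      using c0 by (simp add: fA0 real_sqrt_mult)
    also have "\<dots> \<le> sqrt ((norm (X ** Y - U ** (D ** D) ** transpose V))\<^sup>2)"
      using sq by (rule real_sqrt_le_mono)
    finally show ?thesis by simp
  qed
  have "Inf (f ` {A. invertible A}) \<le> f A0"
    by (rule cInf_lower) (use invA0 in \<open>auto simp: f_def intro: bdd_belowI[where m=0]\<close>)
  then have "c * Inf (f ` {A. invertible A}) \<le> c * f A0" using c0 by simp
  then show ?thesis using cf by (simp add: f_def D_def)
qed

lemma perturb:
  fixes B Xm :: "real^'n^'m"
  assumes "\<And>v. a * norm v \<le> norm (B *v v)" "norm (Xm - B) \<le> e" "c \<le> a - e"
  shows "c * norm v \<le> norm (Xm *v v)"
proof -
  have "B *v v = Xm *v v - (Xm - B) *v v" by (simp add: matrix_vector_mult_diff_rdistrib)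
  then have "norm (B *v v) \<le> norm (Xm *v v) + norm ((Xm - B) *v v)"
    by (simp add: norm_triangle_ineq4)
  moreover have "norm ((Xm - B) *v v) \<le> e * norm v"
  proof -
    have "norm (Xm - B) * norm v \<le> e * norm v" using assms(2) by (rule mult_right_mono) simp
    then show ?thesis using mv_norm_le[of "Xm - B" v] by linarith
  qed
  moreover have "c * norm v \<le> (a - e) * norm v" using assms(3) by (simp add: mult_right_mono)
  ultimately show ?thesis using assms(1)[of v] by (simp add: algebra_simps)
qed

lemma arith2:
  fixes s \<nu> K :: real
  assumes s0: "s > 0" and nu: "\<nu> > 1/2" and K: "K = 1 + 2 * (1 + sqrt 2) * \<nu>"
  shows "s / (2 * K) \<le> s\<^sup>2 / (s + (12/10 * s / K + \<nu> * s)) - 12/10 * s / K"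
proof -
  have sq2: "sqrt 2 \<ge> 14/10" by (rule real_le_rsqrt) (simp add: power2_eq_square)
  have K1: "K \<ge> 1 + 48/10 * \<nu>" using K sq2 nu by (simp add: algebra_simps)
  have Kp: "K > 0" using K1 nu by linarith
  have am: "17/10 * (1 + \<nu>) * K + 204/100 \<le> K * K" using arith_main[OF _ K1] nu by simp
  have pos: "s + (12/10 * s / K + \<nu> * s) > 0" using s0 Kp nu by (simp add: add_pos_pos)
  have e: "(s + (12/10 * s / K + \<nu> * s)) * (s / (2 * K) + 12/10 * s / K)
        = s\<^sup>2 * ((17/10 * (1 + \<nu>) * K + 204/100) / (K * K))"
    using Kp by (simp add: field_simps power2_eq_square)
  have r: "(17/10 * (1 + \<nu>) * K + 204/100) / (K * K) \<le> 1" using am Kp by simp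
  have "(s + (12/10 * s / K + \<nu> * s)) * (s / (2 * K) + 12/10 * s / K) \<le> s\<^sup>2"
    unfolding e using mult_left_mono[OF r zero_le_power2[of s]] by (simp only: mult_1_right)
  then have "s / (2 * K) + 12/10 * s / K \<le> s\<^sup>2 / (s + (12/10 * s / K + \<nu> * s))"
    using pos by (simp add: pos_le_divide_eq mult.commute)
  then show ?thesis by simp
qed

theorem theorem4p5:
  fixes M :: "real^'d2^'d1"
    and U :: "real^'r^'d1" and V :: "real^'r^'d2" and lam :: "'r \<Rightarrow> real"
    and X :: "real^'r^'d1" and Y :: "real^'d2^'r" and \<nu> :: real
  assumes rank: "rank M = CARD('r)"
    and U_orth: "transpose U ** U = mat 1"
    and V_orth: "transpose V ** V = mat 1"
    and lam_pos: "\<And>i. lam i > 0"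
    and svd: "M = U ** diagm lam ** transpose V"
    and nu_pos: "\<nu> > 0"
    and close: "max (frob (X - U ** diagm (\<lambda>i. sqrt (lam i))))
                    (frob (Y - diagm (\<lambda>i. sqrt (lam i)) ** transpose V))
                  \<le> \<nu> * sqrt (singular_value CARD('r) M)"
    and dist_small: "dist_Dstar X Y (U ** diagm (\<lambda>i. sqrt (lam i)))
                       (diagm (\<lambda>i. sqrt (lam i)) ** transpose V)
                  \<le> sqrt (singular_value CARD('r) M) / (1 + 2 * (1 + sqrt 2) * \<nu>)"
  shows "frob (X ** Y - M) \<ge>
           sqrt (singular_value CARD('r) M) / (2 + 4 * (1 + sqrt 2) * \<nu>)
           * dist_Dstar X Y (U ** diagm (\<lambda>i. sqrt (lam i)))
               (diagm (\<lambda>i. sqrt (lam i)) ** transpose V)"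
proof -
  define s where "s = sqrt (singular_value CARD('r) M)"
  define K where "K = 1 + 2 * (1 + sqrt 2) * \<nu>"
  define dd where "dd = (\<lambda>i. sqrt (lam i))"
  define D where "D = diagm dd"
  define Di where "Di = diagm (\<lambda>i. 1 / dd i)"
  define f where "f = (\<lambda>A. sqrt ((norm (X - U ** D ** A))\<^sup>2 + (norm (Y - matrix_inv A ** (D ** transpose V)))\<^sup>2))"
  define dist where "dist = Inf (f ` {A. invertible A})"
  have Kpos: "K > 0" using nu_pos by (simp add: K_def add_pos_nonneg)
  have K1: "K \<ge> 1" using nu_pos by (simp add: K_def)
  have K2: "2 + 4 * (1 + sqrt 2) * \<nu> = 2 * K" by (simp add: K_def)
  have dpos: "dd i > 0" for i using lam_pos[of i] by (simp add: dd_def)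
  have DD: "D ** D = diagm lam"
  proof -
    have "(\<lambda>i. dd i * dd i) = lam" using lam_pos by (simp add: fun_eq_iff dd_def less_imp_le)
    then show ?thesis by (simp add: D_def diag_mm)
  qed
  have M': "M = U ** (D ** D) ** transpose V" by (simp add: svd DD)
  have distE: "dist_Dstar X Y (U ** diagm (\<lambda>i. sqrt (lam i))) (diagm (\<lambda>i. sqrt (lam i)) ** transpose V) = dist"
    by (simp add: dist_Dstar_def frob_norm dist_def f_def D_def dd_def)
  have ne: "{A::real^'r^'r. invertible A} \<noteq> {}"
  proof -
    have "invertible (mat 1 :: real^'r^'r)" unfolding invertible_def by (intro exI[of _ "mat 1"]) simp
    then show ?thesis by blast
  qed
  have dist0: "dist \<ge> 0" unfolding dist_def f_def by (rule cInf_greatest) (use ne in auto)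
  have goal_eq: "?thesis \<longleftrightarrow> s / (2 * K) * dist \<le> norm (X ** Y - M)"
    by (simp only: K2 distE s_def frob_norm)
  show ?thesis
  proof (cases "s > 0")
    case False
    then have "s / (2 * K) * dist \<le> 0" using Kpos dist0 by (simp add: mult_nonpos_nonneg divide_nonpos_pos)
    then show ?thesis unfolding goal_eq by (meson norm_ge_zero order_trans)
  next
    case s0: True
    define c where "c = s / (2 * K)"
    have c0: "c > 0" using s0 Kpos by (simp add: c_def)
    have slam: "s \<le> dd i" for i
    proof -
      have "singular_value CARD('r) M \<le> lam i" unfolding svd by (rule sv_le[OF U_orth V_orth lam_pos])
      then show ?thesis by (simp add: s_def dd_def real_sqrt_le_mono)
    qed
    have closeX: "norm (X - U ** D) \<le> \<nu> * s" and closeY: "norm (Y - D ** transpose V) \<le> \<nu> * s"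
      using close by (simp_all add: frob_norm s_def D_def dd_def)
    have Dlow: "s * norm v \<le> norm (D *v v)" for v
      unfolding D_def by (rule diag_lower) (use slam s0 dpos in \<open>auto simp: less_imp_le\<close>)
    have DT: "transpose D = D" by (simp add: D_def diag_transpose)
    have hXY: "(\<forall>v. c * norm v \<le> norm ((transpose U ** X) *v v)) \<and> (\<forall>v. c * norm v \<le> norm (transpose (Y ** V) *v v))"
    proof (cases "\<nu> \<le> 1/2")
      case True
      have cs: "c \<le> s - \<nu> * s"
      proof -
        have "c \<le> s / 2" unfolding c_def using s0 K1 by (intro divide_left_mono) auto
        also have "\<dots> \<le> s - \<nu> * s"
        proof -
          have "\<nu> * s \<le> 1/2 * s" using True s0 by (intro mult_right_mono) auto
          then show ?thesis by simp
        qed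
        finally show ?thesis .
      qed
      have e1: "transpose U ** X - D = transpose U ** (X - U ** D)"
        by (simp add: mm_diff_l matrix_mul_assoc U_orth)
      have n1: "norm (transpose U ** X - D) \<le> \<nu> * s"
        unfolding e1 using contr_left[OF U_orth, of "X - U ** D"] closeX by linarith
      have e2: "transpose (Y ** V) - D = transpose ((Y - D ** transpose V) ** V)"
        by (simp add: mm_diff_r transpose_diff DT matrix_mul_assoc[symmetric] V_orth)
      have n2: "norm (transpose (Y ** V) - D) \<le> \<nu> * s"
        unfolding e2 norm_transpose using contr_right[OF V_orth, of "Y - D ** transpose V"] closeY by linarith
      show ?thesis
        using perturb[OF Dlow n1 cs] perturb[OF Dlow n2 cs] by blast
    next
      case False
      then have nu2: "\<nu> > 1/2" by simp
      define \<delta> where "\<delta> = 12/10 * s / K"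
      have "dist < \<delta>"
      proof -
        have "dist \<le> s / K" using dist_small by (simp add: distE s_def K_def)
        also have "\<dots> < \<delta>" using s0 Kpos unfolding \<delta>_def by (intro divide_strict_right_mono) auto
        finally show ?thesis .
      qed
      then obtain A where invA: "invertible A" and fA: "f A < \<delta>"
        using cInf_lessD[of "f ` {A. invertible A}" \<delta>] ne unfolding dist_def by auto
      define Ai where "Ai = matrix_inv A"
      have AAi: "A ** Ai = mat 1" and AiA: "Ai ** A = mat 1"
        using matrix_inv_props[OF invA] by (simp_all add: Ai_def)
      have eX: "norm (X - U ** D ** A) < \<delta>"
        using fA unfolding f_def by (meson order_le_less_trans real_sqrt_sum_squares_ge1)
      have eY: "norm (Y - Ai ** (D ** transpose V)) < \<delta>"
        using fA unfolding f_def Ai_def by (meson order_le_less_trans real_sqrt_sum_squares_ge2)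
      define \<mu> where "\<mu> = \<delta> + \<nu> * s"
      have mu0: "\<mu> \<ge> 0" using s0 Kpos nu_pos by (simp add: \<mu>_def \<delta>_def)
      define B where "B = D ** A"
      define C where "C = Ai ** D"
      have DDi: "D ** Di = mat 1" and DiD: "Di ** D = mat 1"
      proof -
        have "(\<lambda>i. dd i * (1 / dd i)) = (\<lambda>i. 1)" using dpos by (simp add: fun_eq_iff less_imp_neq[symmetric])
        then show "D ** Di = mat 1" unfolding D_def Di_def diag_mm by (simp only: diag_one)
        have "(\<lambda>i. (1 / dd i) * dd i) = (\<lambda>i. 1)" using dpos by (simp add: fun_eq_iff less_imp_neq[symmetric])
        then show "Di ** D = mat 1" unfolding D_def Di_def diag_mm by (simp only: diag_one)
      qed
      have r1: "D ** (Di ** Z) = Z" for Z :: "real^'r^'r" by (simp add: matrix_mul_assoc DDi)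
      have r2: "Di ** (D ** Z) = Z" for Z :: "real^'r^'r" by (simp add: matrix_mul_assoc DiD)
      have id1: "C ** Di ** Di ** B = mat 1"
        unfolding B_def C_def by (simp add: matrix_mul_assoc[symmetric] r1 r2 AiA)
      have id2: "transpose B ** Di ** Di ** transpose C = mat 1"
      proof -
        have "transpose B ** Di ** Di ** transpose C = transpose A ** (D ** (Di ** (Di ** (D ** transpose Ai))))"
          unfolding B_def C_def by (simp add: matrix_transpose_mul DT matrix_mul_assoc[symmetric])
        also have "\<dots> = transpose (Ai ** A)" by (simp add: r1 r2 matrix_transpose_mul)
        finally show ?thesis by (simp add: AiA)
      qed
      have nB: "norm (B - D) \<le> \<mu>"
      proof -
        have "B - D = transpose U ** (U ** D ** A - U ** D)"
          by (simp add: B_def mm_diff_l matrix_mul_assoc U_orth)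
        then have "norm (B - D) \<le> norm (U ** D ** A - U ** D)" using contr_left[OF U_orth] by simp
        also have "\<dots> \<le> norm (X - U ** D ** A) + norm (X - U ** D)"
        proof -
          have "U ** D ** A - U ** D = (X - U ** D) - (X - U ** D ** A)" by simp
          then show ?thesis using norm_triangle_ineq4[of "X - U ** D" "X - U ** D ** A"] by simp
        qed
        finally show ?thesis using eX closeX by (simp add: \<mu>_def)
      qed
      have nC: "norm (C - D) \<le> \<mu>"
      proof -
        have "C - D = (Ai ** (D ** transpose V) - D ** transpose V) ** V"
          by (simp add: C_def mm_diff_r matrix_mul_assoc[symmetric] V_orth)
        then have "norm (C - D) \<le> norm (Ai ** (D ** transpose V) - D ** transpose V)" using contr_right[OF V_orth] by simp
        also have "\<dots> \<le> norm (Y - Ai ** (D ** transpose V)) + norm (Y - D ** transpose V)"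
        proof -
          have "Ai ** (D ** transpose V) - D ** transpose V = (Y - D ** transpose V) - (Y - Ai ** (D ** transpose V))" by simp
          then show ?thesis using norm_triangle_ineq4[of "Y - D ** transpose V" "Y - Ai ** (D ** transpose V)"] by simp
        qed
        finally show ?thesis using eY closeY by (simp add: \<mu>_def)
      qed
      have nBT: "norm (transpose B - D) \<le> \<mu>"
      proof -
        have "transpose B - D = transpose (B - D)" by (simp add: transpose_diff DT)
        then show ?thesis using nB by (simp add: norm_transpose)
      qed
      have nCT: "norm (transpose C - D) \<le> \<mu>"
      proof -
        have "transpose C - D = transpose (C - D)" by (simp add: transpose_diff DT)
        then show ?thesis using nC by (simp add: norm_transpose)
      qed
      have lowB: "s\<^sup>2 / (s + \<mu>) * norm w \<le> norm (B *v w)" for w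
        using sig_lower[of C dd B \<mu> s w] id1 nC mu0 s0 slam by (simp add: D_def Di_def)
      have lowC: "s\<^sup>2 / (s + \<mu>) * norm w \<le> norm (transpose C *v w)" for w
        using sig_lower[of "transpose B" dd "transpose C" \<mu> s w] id2 nBT mu0 s0 slam by (simp add: D_def Di_def)
      have cs: "c \<le> s\<^sup>2 / (s + \<mu>) - \<delta>"
        unfolding c_def \<mu>_def \<delta>_def using arith2[OF s0 nu2 K_def] by simp
      have n1: "norm (transpose U ** X - B) \<le> \<delta>"
      proof -
        have "transpose U ** X - B = transpose U ** (X - U ** D ** A)"
          by (simp add: B_def mm_diff_l matrix_mul_assoc U_orth)
        then show ?thesis using contr_left[OF U_orth, of "X - U ** D ** A"] eX by simp
      qed
      have n2: "norm (transpose (Y ** V) - transpose C) \<le> \<delta>"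
      proof -
        have "Y ** V - C = (Y - Ai ** (D ** transpose V)) ** V"
          by (simp add: C_def mm_diff_r matrix_mul_assoc[symmetric] V_orth)
        then have "norm (Y ** V - C) \<le> \<delta>" using contr_right[OF V_orth, of "Y - Ai ** (D ** transpose V)"] eY by simp
        then show ?thesis by (simp add: transpose_diff[symmetric] norm_transpose)
      qed
      show ?thesis using perturb[OF lowB n1 cs] perturb[OF lowC n2 cs] by blast
    qed
    have "c * dist \<le> norm (X ** Y - M)"
      unfolding dist_def f_def M' D_def
      by (rule key[OF U_orth V_orth dpos c0]) (use hXY in auto)
    then show ?thesis unfolding goal_eq c_def .
  qed
qed

end
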